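(* Let $I=(f_1,\dots,f_s)$ be an ideal of $R$ generated by homogeneous polynomials and let $M$ be a graded generalized Eulerian $A_n(K)$-module. Then $H^i_I(M)$ is a generalized Eulerian $A_n(K)$-module for all $i\ge0$.
   Context: $K$ is a field of characteristic zero, $R=K[X_1,\dots,X_n]$ standard graded, $A_n(K)$ the Weyl algebra graded by $\deg X_i=1$, $\deg\partial_i=-1$; $\mathcal E_n=\sum_iX_i\partial_i$; $|z|$ is the degree of homogeneous $z$. A graded left $A_n(K)$-module $M$ is generalized Eulerian if for every homogeneous $z\in M$ there is $a\ge1$ with $(\mathcal E_n-|z|)^az=0$. $H^i_I(M)$ is the local cohomology, with its natural graded $A_n(K)$-module structure (e.g. via the Čech complex on $f_1,\dots,f_s$). *)

theory Defs
  imports Main "HOL-Library.Poly_Mapping"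
begin

type_synonym 'k mpoly = "(nat \<Rightarrow>\<^sub>0 nat) \<Rightarrow>\<^sub>0 'k"

definition mon_deg :: "(nat \<Rightarrow>\<^sub>0 nat) \<Rightarrow> nat" where
  "mon_deg \<alpha> = (\<Sum>i\<in>Poly_Mapping.keys \<alpha>. Poly_Mapping.lookup \<alpha> i)"

definition in_vars :: "nat \<Rightarrow> 'k::zero mpoly \<Rightarrow> bool" where
  "in_vars n p \<longleftrightarrow> (\<forall>\<alpha>\<in>Poly_Mapping.keys p. Poly_Mapping.keys \<alpha> \<subseteq> {..<n})"

definition homogeneous_poly :: "'k::zero mpoly \<Rightarrow> bool" where
  "homogeneous_poly p \<longleftrightarrow> (\<exists>e. \<forall>\<alpha>\<in>Poly_Mapping.keys p. mon_deg \<alpha> = e)"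

definition hdeg :: "'k::zero mpoly \<Rightarrow> nat" where
  "hdeg p = (if p = 0 then 0 else Max (mon_deg ` Poly_Mapping.keys p))"

definition pderiv_mp :: "nat \<Rightarrow> 'k::comm_ring_1 mpoly \<Rightarrow> 'k mpoly" where
  "pderiv_mp i p = (\<Sum>\<alpha>\<in>Poly_Mapping.keys p.
      Poly_Mapping.single (\<alpha> - Poly_Mapping.single i 1) (of_nat (Poly_Mapping.lookup \<alpha> i) * Poly_Mapping.lookup p \<alpha>))"

text \<open>A module is modelled on a type 'm with its additive group structure, a scalar
  multiplication sm by K, operators X i (multiplication by X_i) and D i (action of d_i)
  for i < n, and the homogeneous components hom d (degree d elements, including 0).\<close>

definition graded_weyl_module ::
  "nat \<Rightarrow> ('k::field \<Rightarrow> 'm::ab_group_add \<Rightarrow> 'm) \<Rightarrow> (nat \<Rightarrow> 'm \<Rightarrow> 'm) \<Rightarrow> (nat \<Rightarrow> 'm \<Rightarrow> 'm)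
   \<Rightarrow> (int \<Rightarrow> 'm set) \<Rightarrow> bool" where
  "graded_weyl_module n sm X D hom \<longleftrightarrow>
     \<comment> \<open>K-vector space\<close>
     (\<forall>a x y. sm a (x + y) = sm a x + sm a y) \<and>
     (\<forall>a b x. sm (a + b) x = sm a x + sm b x) \<and>
     (\<forall>a b x. sm (a * b) x = sm a (sm b x)) \<and>
     (\<forall>x. sm 1 x = x) \<and>
     \<comment> \<open>X_i, d_i act K-linearly\<close>
     (\<forall>i<n. \<forall>x y. X i (x + y) = X i x + X i y \<and> D i (x + y) = D i x + D i y) \<and>
     (\<forall>i<n. \<forall>a x. X i (sm a x) = sm a (X i x) \<and> D i (sm a x) = sm a (D i x)) \<and>
     \<comment> \<open>Weyl algebra relations\<close>
     (\<forall>i<n. \<forall>j<n. \<forall>x. X i (X j x) = X j (X i x)) \<and>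
     (\<forall>i<n. \<forall>j<n. \<forall>x. D i (D j x) = D j (D i x)) \<and>
     (\<forall>i<n. \<forall>j<n. \<forall>x. D i (X j x) - X j (D i x) = (if i = j then x else 0)) \<and>
     \<comment> \<open>grading: subspaces, direct sum decomposition, deg X_i = 1, deg d_i = -1\<close>
     (\<forall>d. 0 \<in> hom d \<and> (\<forall>x\<in>hom d. \<forall>y\<in>hom d. x + y \<in> hom d) \<and> (\<forall>a. \<forall>x\<in>hom d. sm a x \<in> hom d)) \<and>
     (\<forall>x. \<exists>c. finite {d. c d \<noteq> 0} \<and> (\<forall>d. c d \<in> hom d) \<and> x = (\<Sum>d\<in>{d. c d \<noteq> 0}. c d)) \<and>
     (\<forall>c. finite {d. c d \<noteq> 0} \<and> (\<forall>d. c d \<in> hom d) \<and> (\<Sum>d\<in>{d. c d \<noteq> 0}. c d) = 0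
          \<longrightarrow> (\<forall>d. c d = 0)) \<and>
     (\<forall>i<n. \<forall>d. \<forall>x\<in>hom d. X i x \<in> hom (d + 1) \<and> D i x \<in> hom (d - 1))"

definition euler :: "nat \<Rightarrow> (nat \<Rightarrow> 'm \<Rightarrow> 'm) \<Rightarrow> (nat \<Rightarrow> 'm \<Rightarrow> 'm) \<Rightarrow> 'm::ab_group_add \<Rightarrow> 'm" where
  "euler n X D x = (\<Sum>i<n. X i (D i x))"

definition gen_eulerian ::
  "nat \<Rightarrow> ('k::field \<Rightarrow> 'm::ab_group_add \<Rightarrow> 'm) \<Rightarrow> (nat \<Rightarrow> 'm \<Rightarrow> 'm) \<Rightarrow> (nat \<Rightarrow> 'm \<Rightarrow> 'm)
   \<Rightarrow> (int \<Rightarrow> 'm set) \<Rightarrow> bool" where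
  "gen_eulerian n sm X D hom \<longleftrightarrow>
     (\<forall>d. \<forall>z\<in>hom d. \<exists>a\<ge>1. ((\<lambda>x. euler n X D x - sm (of_int d) x) ^^ a) z = 0)"

definition Xmon :: "nat \<Rightarrow> (nat \<Rightarrow> 'm \<Rightarrow> 'm) \<Rightarrow> (nat \<Rightarrow>\<^sub>0 nat) \<Rightarrow> 'm \<Rightarrow> 'm" where
  "Xmon n X \<alpha> = foldr (\<lambda>i g. (X i ^^ Poly_Mapping.lookup \<alpha> i) \<circ> g) [0..<n] id"

definition pact :: "nat \<Rightarrow> ('k::field \<Rightarrow> 'm::ab_group_add \<Rightarrow> 'm) \<Rightarrow> (nat \<Rightarrow> 'm \<Rightarrow> 'm)
    \<Rightarrow> 'k mpoly \<Rightarrow> 'm \<Rightarrow> 'm" where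
  "pact n sm X p x = (\<Sum>\<alpha>\<in>Poly_Mapping.keys p. sm (Poly_Mapping.lookup p \<alpha>) (Xmon n X \<alpha> x))"

section \<open>Localization M_g: an element m/g^k is represented by the pair (m,k)\<close>

definition loc_eq :: "nat \<Rightarrow> ('k::field \<Rightarrow> 'm::ab_group_add \<Rightarrow> 'm) \<Rightarrow> (nat \<Rightarrow> 'm \<Rightarrow> 'm)
    \<Rightarrow> 'k mpoly \<Rightarrow> 'm \<times> nat \<Rightarrow> 'm \<times> nat \<Rightarrow> bool" where
  "loc_eq n sm X g mk mk' \<longleftrightarrow>
     (\<exists>l. pact n sm X (g ^ l)
            (pact n sm X (g ^ snd mk') (fst mk) - pact n sm X (g ^ snd mk) (fst mk')) = 0)"

text \<open>m/g^k is homogeneous of degree d in the graded module M_g iff it can be written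
  as m'/g^k' with m' homogeneous of degree d + k' deg g\<close>
definition loc_hom :: "nat \<Rightarrow> ('k::field \<Rightarrow> 'm::ab_group_add \<Rightarrow> 'm) \<Rightarrow> (nat \<Rightarrow> 'm \<Rightarrow> 'm)
    \<Rightarrow> (int \<Rightarrow> 'm set) \<Rightarrow> 'k mpoly \<Rightarrow> int \<Rightarrow> 'm \<times> nat \<Rightarrow> bool" where
  "loc_hom n sm X hom g d mk \<longleftrightarrow>
     (\<exists>m' k'. m' \<in> hom (d + int k' * int (hdeg g)) \<and> loc_eq n sm X g mk (m', k'))"

text \<open>(E_n - d) on M_g, via the induced A_n(K)-action:
  X_i (m/g^k) = X_i m / g^k,  d_i (m/g^k) = (g d_i m - k (d_i g) m)/g^(k+1)\<close>
definition loc_euler_minus :: "nat \<Rightarrow> ('k::field \<Rightarrow> 'm::ab_group_add \<Rightarrow> 'm) \<Rightarrow> (nat \<Rightarrow> 'm \<Rightarrow> 'm)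
    \<Rightarrow> (nat \<Rightarrow> 'm \<Rightarrow> 'm) \<Rightarrow> 'k mpoly \<Rightarrow> int \<Rightarrow> 'm \<times> nat \<Rightarrow> 'm \<times> nat" where
  "loc_euler_minus n sm X D g d mk =
     ((\<Sum>i<n. X i (pact n sm X g (D i (fst mk)) - sm (of_nat (snd mk)) (pact n sm X (pderiv_mp i g) (fst mk))))
        - sm (of_int d) (pact n sm X g (fst mk)),
      Suc (snd mk))"

text \<open>C^i = direct sum over S subset {0..<s}, card S = i, of M_(f_S), f_S = prod_(j in S) f_j.
  A cochain is given by a family of representatives c S = (m_S, k_S) of elements m_S / f_S^(k_S);
  only the components with S a subset of {..<s} of cardinality i matter.\<close>

definition fS :: "(nat \<Rightarrow> 'k::comm_ring_1 mpoly) \<Rightarrow> nat set \<Rightarrow> 'k mpoly" where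
  "fS f S = (\<Prod>j\<in>S. f j)"

definition coch_eq :: "nat \<Rightarrow> ('k::field \<Rightarrow> 'm::ab_group_add \<Rightarrow> 'm) \<Rightarrow> (nat \<Rightarrow> 'm \<Rightarrow> 'm)
    \<Rightarrow> nat \<Rightarrow> (nat \<Rightarrow> 'k mpoly) \<Rightarrow> nat \<Rightarrow> (nat set \<Rightarrow> 'm \<times> nat) \<Rightarrow> (nat set \<Rightarrow> 'm \<times> nat) \<Rightarrow> bool" where
  "coch_eq n sm X s f i c c' \<longleftrightarrow>
     (\<forall>S. S \<subseteq> {..<s} \<and> card S = i \<longrightarrow> loc_eq n sm X (fS f S) (c S) (c' S))"

text \<open>Cech differential: (dc)_T = sum_(t in T) (-1)^(position of t in T) c_(T-{t}),
  where m/f_(T-{t})^k is identified with (f_t^k m)/f_T^k; the components are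
  brought to a common denominator f_T^K with K the sum of the exponents.\<close>
definition cech_d :: "nat \<Rightarrow> ('k::field \<Rightarrow> 'm::ab_group_add \<Rightarrow> 'm) \<Rightarrow> (nat \<Rightarrow> 'm \<Rightarrow> 'm)
    \<Rightarrow> (nat \<Rightarrow> 'k mpoly) \<Rightarrow> (nat set \<Rightarrow> 'm \<times> nat) \<Rightarrow> (nat set \<Rightarrow> 'm \<times> nat)" where
  "cech_d n sm X f c T =
     (let K = (\<Sum>t\<in>T. snd (c (T - {t}))) in
      ((\<Sum>t\<in>T. (let x = pact n sm X (fS f T ^ (K - snd (c (T - {t}))) * f t ^ snd (c (T - {t})))
                                 (fst (c (T - {t})))
                        in if even (card {u\<in>T. u < t}) then x else - x)), K))"

definition cocycle :: "nat \<Rightarrow> ('k::field \<Rightarrow> 'm::ab_group_add \<Rightarrow> 'm) \<Rightarrow> (nat \<Rightarrow> 'm \<Rightarrow> 'm)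
    \<Rightarrow> nat \<Rightarrow> (nat \<Rightarrow> 'k mpoly) \<Rightarrow> nat \<Rightarrow> (nat set \<Rightarrow> 'm \<times> nat) \<Rightarrow> bool" where
  "cocycle n sm X s f i c \<longleftrightarrow> coch_eq n sm X s f (Suc i) (cech_d n sm X f c) (\<lambda>_. (0, 0))"

definition coboundary :: "nat \<Rightarrow> ('k::field \<Rightarrow> 'm::ab_group_add \<Rightarrow> 'm) \<Rightarrow> (nat \<Rightarrow> 'm \<Rightarrow> 'm)
    \<Rightarrow> nat \<Rightarrow> (nat \<Rightarrow> 'k mpoly) \<Rightarrow> nat \<Rightarrow> (nat set \<Rightarrow> 'm \<times> nat) \<Rightarrow> bool" where
  "coboundary n sm X s f i c \<longleftrightarrow>
     (if i = 0 then coch_eq n sm X s f 0 c (\<lambda>_. (0, 0))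
      else (\<exists>b. coch_eq n sm X s f i (cech_d n sm X f b) c))"

text \<open>homogeneous cochains of degree d (the Cech complex is a complex of graded modules
  with degree-preserving differential; H^i_d = Z^i_d / B^i_d)\<close>
definition coch_hom :: "nat \<Rightarrow> ('k::field \<Rightarrow> 'm::ab_group_add \<Rightarrow> 'm) \<Rightarrow> (nat \<Rightarrow> 'm \<Rightarrow> 'm)
    \<Rightarrow> (int \<Rightarrow> 'm set) \<Rightarrow> nat \<Rightarrow> (nat \<Rightarrow> 'k mpoly) \<Rightarrow> nat \<Rightarrow> int \<Rightarrow> (nat set \<Rightarrow> 'm \<times> nat) \<Rightarrow> bool" where
  "coch_hom n sm X hom s f i d c \<longleftrightarrow>
     (\<forall>S. S \<subseteq> {..<s} \<and> card S = i \<longrightarrow> loc_hom n sm X hom (fS f S) d (c S))"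

definition coch_euler_minus :: "nat \<Rightarrow> ('k::field \<Rightarrow> 'm::ab_group_add \<Rightarrow> 'm) \<Rightarrow> (nat \<Rightarrow> 'm \<Rightarrow> 'm)
    \<Rightarrow> (nat \<Rightarrow> 'm \<Rightarrow> 'm) \<Rightarrow> (nat \<Rightarrow> 'k mpoly) \<Rightarrow> int \<Rightarrow> (nat set \<Rightarrow> 'm \<times> nat) \<Rightarrow> (nat set \<Rightarrow> 'm \<times> nat)" where
  "coch_euler_minus n sm X D f d c S = loc_euler_minus n sm X D (fS f S) d (c S)"

text \<open>H^i_I(M) (I = (f_0,...,f_(s-1))) is generalized Eulerian: every homogeneous element of
  degree d, i.e. the class of a homogeneous cocycle c of degree d, is killed by some
  power (E_n - d)^a, a >= 1, i.e. (E_n - d)^a c is a coboundary.\<close>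
definition local_cohom_gen_eulerian :: "nat \<Rightarrow> ('k::field \<Rightarrow> 'm::ab_group_add \<Rightarrow> 'm) \<Rightarrow> (nat \<Rightarrow> 'm \<Rightarrow> 'm)
    \<Rightarrow> (nat \<Rightarrow> 'm \<Rightarrow> 'm) \<Rightarrow> (int \<Rightarrow> 'm set) \<Rightarrow> nat \<Rightarrow> (nat \<Rightarrow> 'k mpoly) \<Rightarrow> nat \<Rightarrow> bool" where
  "local_cohom_gen_eulerian n sm X D hom s f i \<longleftrightarrow>
     (\<forall>d c. cocycle n sm X s f i c \<and> coch_hom n sm X hom s f i d c \<longrightarrow>
        (\<exists>a\<ge>1. coboundary n sm X s f i ((coch_euler_minus n sm X D f d ^^ a) c)))"

end

theory Submission
  imports Defs
begin

definition lin :: "('k \<Rightarrow> 'm \<Rightarrow> 'm) \<Rightarrow> ('m::ab_group_add \<Rightarrow> 'm) \<Rightarrow> bool" where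
  "lin sm \<phi> \<longleftrightarrow> (\<forall>x y. \<phi> (x+y) = \<phi> x + \<phi> y) \<and> (\<forall>a x. \<phi> (sm a x) = sm a (\<phi> x))"

locale wm =
  fixes n :: nat and sm :: "'k::field \<Rightarrow> 'm::ab_group_add \<Rightarrow> 'm" and X D :: "nat \<Rightarrow> 'm \<Rightarrow> 'm"
  assumes sm_add: "sm a (x+y) = sm a x + sm a y"
    and sm_addl: "sm (a+b) x = sm a x + sm b x"
    and sm_mult: "sm (a*b) x = sm a (sm b x)"
    and sm_one: "sm 1 x = x"
    and X_add: "i<n \<Longrightarrow> X i (x+y) = X i x + X i y"
    and D_add: "i<n \<Longrightarrow> D i (x+y) = D i x + D i y"
    and X_sm: "i<n \<Longrightarrow> X i (sm a x) = sm a (X i x)"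
    and D_sm: "i<n \<Longrightarrow> D i (sm a x) = sm a (D i x)"
    and X_comm: "i<n \<Longrightarrow> j<n \<Longrightarrow> X i (X j x) = X j (X i x)"
    and DX: "i<n \<Longrightarrow> j<n \<Longrightarrow> D i (X j x) - X j (D i x) = (if i = j then x else 0)"
begin

lemma sm_zero[simp]: "sm 0 x = 0"
  using sm_addl[of 0 0 x] by simp
lemma sm_zero_r[simp]: "sm a 0 = 0"
  using sm_add[of a 0 0] by simp
lemma sm_minus: "sm a (- x) = - sm a x"
  using sm_add[of a x "-x"] by (simp add: add_eq_0_iff2)
lemma sm_diff: "sm a (x - y) = sm a x - sm a y"
  by (metis diff_conv_add_uminus sm_add sm_minus)
lemma sm_diffl: "sm (a - b) x = sm a x - sm b x"
  using sm_addl[of "a-b" b x] by (simp add: eq_diff_eq)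
lemma sm_comm: "sm a (sm b x) = sm b (sm a x)"
  by (metis mult.commute sm_mult)
lemma sm_sum: "sm a (\<Sum>j\<in>J. h j) = (\<Sum>j\<in>J. sm a (h j))"
  by (induction J rule: infinite_finite_induct) (auto simp: sm_add)
lemma sm_suml: "sm (\<Sum>j\<in>J. h j) x = (\<Sum>j\<in>J. sm (h j) x)"
  by (induction J rule: infinite_finite_induct) (auto simp: sm_addl)

lemma lin_zero: "lin sm \<phi> \<Longrightarrow> \<phi> 0 = 0"
  unfolding lin_def by (metis add_cancel_right_right add_0)
lemma lin_minus: "lin sm \<phi> \<Longrightarrow> \<phi> (- x) = - \<phi> x"
  using lin_zero unfolding lin_def by (metis add.right_inverse eq_neg_iff_add_eq_0)
lemma lin_diff: "lin sm \<phi> \<Longrightarrow> \<phi> (x - y) = \<phi> x - \<phi> y"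
  using lin_minus unfolding lin_def by (metis diff_conv_add_uminus)
lemma lin_add: "lin sm \<phi> \<Longrightarrow> \<phi> (x + y) = \<phi> x + \<phi> y"
  unfolding lin_def by blast
lemma lin_sm: "lin sm \<phi> \<Longrightarrow> \<phi> (sm a x) = sm a (\<phi> x)"
  unfolding lin_def by blast
lemma lin_sum: "lin sm \<phi> \<Longrightarrow> \<phi> (\<Sum>j\<in>J. h j) = (\<Sum>j\<in>J. \<phi> (h j))"
  by (induction J rule: infinite_finite_induct) (auto simp: lin_zero lin_add)
lemma lin_comp: "lin sm \<phi> \<Longrightarrow> lin sm \<psi> \<Longrightarrow> lin sm (\<phi> \<circ> \<psi>)"
  unfolding lin_def by simp
lemma lin_id: "lin sm id" unfolding lin_def by simp
lemma lin_funpow: "lin sm \<phi> \<Longrightarrow> lin sm (\<phi> ^^ a)"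
  by (induction a) (auto intro: lin_comp lin_id)
lemma lin_X: "i<n \<Longrightarrow> lin sm (X i)" unfolding lin_def by (simp add: X_add X_sm)
lemma lin_D: "i<n \<Longrightarrow> lin sm (D i)" unfolding lin_def by (simp add: D_add D_sm)
lemma lin_sm_op: "lin sm (sm c)" unfolding lin_def by (simp add: sm_add sm_comm)
lemma lin_sumop: "(\<And>j. j\<in>J \<Longrightarrow> lin sm (h j)) \<Longrightarrow> lin sm (\<lambda>x. \<Sum>j\<in>J. h j x)"
  unfolding lin_def by (auto simp: sum.distrib sm_sum)
lemma lin_diffop: "lin sm \<phi> \<Longrightarrow> lin sm \<psi> \<Longrightarrow> lin sm (\<lambda>x. \<phi> x - \<psi> x)"
  unfolding lin_def by (auto simp: sm_diff)

definition FL :: "nat list \<Rightarrow> (nat \<Rightarrow> nat) \<Rightarrow> 'm \<Rightarrow> 'm" where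
  "FL L h = foldr (\<lambda>i g. (X i ^^ h i) \<circ> g) L id"

lemma FL_Nil[simp]: "FL [] h = id" by (simp add: FL_def)
lemma FL_Cons: "FL (i # L) h x = (X i ^^ h i) (FL L h x)" by (simp add: FL_def)

lemma lin_FL: "set L \<subseteq> {..<n} \<Longrightarrow> lin sm (FL L h)"
  by (induction L) (auto simp: FL_def intro!: lin_comp lin_funpow lin_X lin_id)

lemma X_funpow_comm: "i<n \<Longrightarrow> j<n \<Longrightarrow> X j ((X i ^^ a) y) = (X i ^^ a) (X j y)"
  by (induction a arbitrary: y) (auto simp: X_comm)

lemma X_FL_comm: "set L \<subseteq> {..<n} \<Longrightarrow> j<n \<Longrightarrow> X j (FL L h x) = FL L h (X j x)"
  by (induction L arbitrary: x) (auto simp: FL_Cons X_funpow_comm)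

lemma Xpow_FL_comm: "set L \<subseteq> {..<n} \<Longrightarrow> j<n \<Longrightarrow> (X j ^^ b) (FL L h x) = FL L h ((X j ^^ b) x)"
  by (induction b arbitrary: x) (auto simp: X_FL_comm)

lemma FL_mult: "set L \<subseteq> {..<n} \<Longrightarrow> FL L h (FL L h' x) = FL L (\<lambda>i. h i + h' i) x"
proof (induction L arbitrary: x)
  case Nil then show ?case by simp
next
  case (Cons i L)
  then have sL: "set L \<subseteq> {..<n}" and i: "i < n" by auto
  have "FL (i # L) h (FL (i # L) h' x) = (X i ^^ h i) (FL L h ((X i ^^ h' i) (FL L h' x)))"
    by (simp only: FL_Cons)
  also have "\<dots> = (X i ^^ h i) ((X i ^^ h' i) (FL L h (FL L h' x)))"
    using Xpow_FL_comm[OF sL i] by metis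
  also have "\<dots> = (X i ^^ (h i + h' i)) (FL L (\<lambda>i. h i + h' i) x)"
    using Cons.IH[OF sL] by (simp add: funpow_add)
  finally show ?case by (simp only: FL_Cons)
qed

lemma FL_ind: "distinct L \<Longrightarrow> FL L (\<lambda>j. if j = i then 1 else 0) z = (if i \<in> set L then X i z else z)"
  by (induction L arbitrary: z) (auto simp: FL_Cons)

lemma FL_zero: "FL L (\<lambda>_. 0) x = x"
  by (induction L arbitrary: x) (auto simp: FL_Cons)


abbreviation "XM \<equiv> Xmon n X"
abbreviation "pa \<equiv> pact n sm X"

lemma Xmon_FL: "XM \<alpha> = FL [0..<n] (Poly_Mapping.lookup \<alpha>)"
  by (simp add: Xmon_def FL_def)

lemma lin_Xmon: "lin sm (XM \<alpha>)"
  unfolding Xmon_FL by (rule lin_FL) auto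

lemma Xmon_add: "XM (\<alpha> + \<beta>) x = XM \<alpha> (XM \<beta> x)"
proof -
  have "Poly_Mapping.lookup (\<alpha> + \<beta>) = (\<lambda>i. Poly_Mapping.lookup \<alpha> i + Poly_Mapping.lookup \<beta> i)"
    by (rule ext) (simp add: lookup_add)
  then show ?thesis unfolding Xmon_FL by (subst FL_mult) auto
qed

lemma Xmon_zero: "XM 0 x = x"
proof -
  have "Poly_Mapping.lookup (0::nat \<Rightarrow>\<^sub>0 nat) = (\<lambda>_. 0)" by (rule ext) simp
  then show ?thesis unfolding Xmon_FL using FL_zero by simp
qed

lemma Xmon_single: "i<n \<Longrightarrow> XM (Poly_Mapping.single i 1) x = X i x"
proof -
  assume i: "i<n"
  have "Poly_Mapping.lookup (Poly_Mapping.single i (1::nat)) = (\<lambda>j. if j = i then 1 else 0)"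
    by (auto simp: lookup_single when_def)
  then show ?thesis unfolding Xmon_FL using FL_ind[of "[0..<n]" i x] i by simp
qed

lemma X_Xmon_comm: "i<n \<Longrightarrow> X i (XM \<alpha> x) = XM \<alpha> (X i x)"
  unfolding Xmon_FL by (rule X_FL_comm) auto

lemma Xmon_sm: "XM \<alpha> (sm a x) = sm a (XM \<alpha> x)"
  using lin_Xmon lin_sm by blast

lemma pact_superset:
  assumes "finite A" "Poly_Mapping.keys p \<subseteq> A"
  shows "pa p x = (\<Sum>\<alpha>\<in>A. sm (Poly_Mapping.lookup p \<alpha>) (XM \<alpha> x))"
  unfolding pact_def
  by (rule sum.mono_neutral_right[symmetric]) (use assms in \<open>auto simp: not_in_keys_iff_lookup_eq_zero\<close>)

lemma pact_add: "pa (p + q) x = pa p x + pa q x"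
proof -
  let ?A = "Poly_Mapping.keys p \<union> Poly_Mapping.keys q \<union> Poly_Mapping.keys (p+q)"
  have "pa (p + q) x = (\<Sum>\<alpha>\<in>?A. sm (Poly_Mapping.lookup (p+q) \<alpha>) (XM \<alpha> x))"
    by (rule pact_superset) auto
  also have "\<dots> = (\<Sum>\<alpha>\<in>?A. sm (Poly_Mapping.lookup p \<alpha>) (XM \<alpha> x)) + (\<Sum>\<alpha>\<in>?A. sm (Poly_Mapping.lookup q \<alpha>) (XM \<alpha> x))"
    by (simp add: lookup_add sm_addl sum.distrib)
  also have "\<dots> = pa p x + pa q x"
    by (subst (1 2) pact_superset[where A="?A"]) auto
  finally show ?thesis .
qed

lemma pact_zero_p[simp]: "pa 0 x = 0"
  by (simp add: pact_def)

lemma pact_single: "pa (Poly_Mapping.single \<alpha> c) x = sm c (XM \<alpha> x)"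
  by (cases "c = 0") (auto simp: pact_def)

lemma pact_sum_p: "pa (\<Sum>j\<in>J. p j) x = (\<Sum>j\<in>J. pa (p j) x)"
  by (induction J rule: infinite_finite_induct) (auto simp: pact_add)

lemma lin_pact: "lin sm (pa p)"
proof -
  have "lin sm (\<lambda>x. \<Sum>\<alpha>\<in>Poly_Mapping.keys p. sm (Poly_Mapping.lookup p \<alpha>) (XM \<alpha> x))"
    by (rule lin_sumop) (auto intro: lin_comp[unfolded comp_def] lin_sm_op lin_Xmon simp: comp_def)
  then show ?thesis unfolding pact_def[abs_def] .
qed

lemma X_pact_comm: "i<n \<Longrightarrow> X i (pa p x) = pa p (X i x)"
  unfolding pact_def by (simp add: lin_sum[OF lin_X] X_sm X_Xmon_comm)

lemma poly_expand: "p = (\<Sum>\<alpha>\<in>Poly_Mapping.keys p. Poly_Mapping.single \<alpha> (Poly_Mapping.lookup p \<alpha>))"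
  by (rule poly_mapping_eqI) (auto simp: lookup_sum lookup_single when_def not_in_keys_iff_lookup_eq_zero)

lemma pact_mult: "pa (p * q) x = pa p (pa q x)"
proof -
  have "p * q = (\<Sum>\<alpha>\<in>Poly_Mapping.keys p. \<Sum>\<beta>\<in>Poly_Mapping.keys q.
       Poly_Mapping.single (\<alpha>+\<beta>) (Poly_Mapping.lookup p \<alpha> * Poly_Mapping.lookup q \<beta>))"
    by (subst (1) poly_expand[of p], subst (1) poly_expand[of q])
       (simp add: sum_distrib_left sum_distrib_right mult_single sum.swap[of _ "Poly_Mapping.keys q"])
  then have "pa (p * q) x = (\<Sum>\<alpha>\<in>Poly_Mapping.keys p. \<Sum>\<beta>\<in>Poly_Mapping.keys q.
       sm (Poly_Mapping.lookup p \<alpha> * Poly_Mapping.lookup q \<beta>) (XM (\<alpha>+\<beta>) x))"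
    by (simp add: pact_sum_p pact_single)
  also have "\<dots> = pa p (pa q x)"
    unfolding pact_def
    by (simp add: lin_sum[OF lin_Xmon] sm_sum Xmon_sm sm_mult Xmon_add)
  finally show ?thesis .
qed

lemma pact_one: "pa 1 x = x"
  using pact_single[of 0 1 x] by (simp add: Xmon_zero sm_one)

lemma pact_x_zero[simp]: "pa p 0 = 0" using lin_zero[OF lin_pact] .
lemma pact_x_diff: "pa p (x - y) = pa p x - pa p y" using lin_diff[OF lin_pact] .
lemma pact_x_add: "pa p (x + y) = pa p x + pa p y" using lin_add[OF lin_pact] .
lemma pact_x_sm: "pa p (sm a x) = sm a (pa p x)" using lin_sm[OF lin_pact] .


abbreviation "EU \<equiv> euler n X D"

lemma DX': "i<n \<Longrightarrow> j<n \<Longrightarrow> D i (X j x) = X j (D i x) + (if i = j then x else 0)"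
  using DX[of i j x] by (simp add: diff_eq_eq)

lemma XD_pow:
  assumes i: "i<n" and j: "j<n"
  shows "X i (D i ((X j ^^ a) z)) = (X j ^^ a) (X i (D i z)) + sm (of_nat (if i = j then a else 0)) ((X j ^^ a) z)"
proof (induction a)
  case 0 then show ?case by simp
next
  case (Suc a)
  let ?w = "(X j ^^ a) z"
  have "X i (D i ((X j ^^ Suc a) z)) = X i (X j (D i ?w) + (if i = j then ?w else 0))"
    using DX'[OF i j] by simp
  also have "\<dots> = X j (X i (D i ?w)) + (if i = j then X j ?w else 0)"
    using i j by (simp add: X_add X_comm lin_zero[OF lin_X])
  also have "\<dots> = (X j ^^ Suc a) (X i (D i z)) + sm (of_nat (if i = j then a else 0)) (X j ?w) + (if i = j then X j ?w else 0)"
    using Suc j by (simp add: X_add X_sm)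
  also have "\<dots> = (X j ^^ Suc a) (X i (D i z)) + sm (of_nat (if i = j then Suc a else 0)) ((X j ^^ Suc a) z)"
    by (cases "i = j") (simp_all add: sm_addl sm_one add.assoc)
  finally show ?case .
qed

lemma XD_FL:
  assumes i: "i<n" and L: "set L \<subseteq> {..<n}" "distinct L"
  shows "X i (D i (FL L h y)) = FL L h (X i (D i y)) + sm (of_nat (if i \<in> set L then h i else 0)) (FL L h y)"
  using L
proof (induction L)
  case Nil then show ?case by simp
next
  case (Cons j L)
  then have j: "j<n" and L': "set L \<subseteq> {..<n}" "distinct L" and jL: "j \<notin> set L" by auto
  let ?z = "FL L h y"
  have "X i (D i (FL (j # L) h y)) = (X j ^^ h j) (X i (D i ?z)) + sm (of_nat (if i = j then h j else 0)) ((X j ^^ h j) ?z)"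
    by (simp add: FL_Cons XD_pow[OF i j])
  also have "\<dots> = FL (j # L) h (X i (D i y)) + sm (of_nat (if i \<in> set L then h i else 0)) (FL (j # L) h y)
      + sm (of_nat (if i = j then h j else 0)) (FL (j # L) h y)"
    using Cons.IH[OF L'] j by (simp add: FL_Cons lin_add[OF lin_funpow[OF lin_X]] lin_sm[OF lin_funpow[OF lin_X]])
  also have "\<dots> = FL (j # L) h (X i (D i y)) + sm (of_nat (if i \<in> set (j # L) then h i else 0)) (FL (j # L) h y)"
    using jL by (auto simp: add.assoc sm_addl[symmetric])
  finally show ?case .
qed

lemma lin_E: "lin sm EU"
proof -
  have "lin sm (\<lambda>x. \<Sum>i<n. X i (D i x))"
    by (rule lin_sumop) (auto intro: lin_comp[unfolded comp_def] lin_X lin_D simp: comp_def)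
  then show ?thesis unfolding euler_def[abs_def] .
qed

lemma E_Xmon: "EU (XM \<alpha> y) = XM \<alpha> (EU y) + sm (of_nat (\<Sum>i<n. Poly_Mapping.lookup \<alpha> i)) (XM \<alpha> y)"
proof -
  have "EU (XM \<alpha> y) = (\<Sum>i<n. XM \<alpha> (X i (D i y)) + sm (of_nat (Poly_Mapping.lookup \<alpha> i)) (XM \<alpha> y))"
    unfolding euler_def Xmon_FL
    by (rule sum.cong) (use XD_FL[of _ "[0..<n]", OF _ _ distinct_upt] atLeast0LessThan in auto)
  also have "\<dots> = XM \<alpha> (EU y) + sm (of_nat (\<Sum>i<n. Poly_Mapping.lookup \<alpha> i)) (XM \<alpha> y)"
    by (simp add: sum.distrib euler_def lin_sum[OF lin_Xmon] sm_suml)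
  finally show ?thesis .
qed


lemma mon_deg_eq: "Poly_Mapping.keys \<alpha> \<subseteq> {..<n} \<Longrightarrow> mon_deg \<alpha> = (\<Sum>i<n. Poly_Mapping.lookup \<alpha> i)"
  unfolding mon_deg_def
  by (rule sum.mono_neutral_left) (auto simp: not_in_keys_iff_lookup_eq_zero)

definition "hom_of e p \<longleftrightarrow> (\<forall>\<alpha>\<in>Poly_Mapping.keys p. Poly_Mapping.keys \<alpha> \<subseteq> {..<n} \<and> mon_deg \<alpha> = e)"

lemma E_pact:
  assumes "hom_of e g"
  shows "EU (pa g y) = pa g (EU y) + sm (of_nat e) (pa g y)"
proof -
  have "EU (pa g y) = (\<Sum>\<alpha>\<in>Poly_Mapping.keys g. sm (Poly_Mapping.lookup g \<alpha>) (EU (XM \<alpha> y)))"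
    unfolding pact_def by (simp add: lin_sum[OF lin_E] lin_sm[OF lin_E])
  also have "\<dots> = (\<Sum>\<alpha>\<in>Poly_Mapping.keys g. sm (Poly_Mapping.lookup g \<alpha>) (XM \<alpha> (EU y))
        + sm (of_nat e) (sm (Poly_Mapping.lookup g \<alpha>) (XM \<alpha> y)))"
    apply (rule sum.cong, simp)
    using assms unfolding hom_of_def
    by (simp add: E_Xmon mon_deg_eq[symmetric] sm_add sm_comm)
  also have "\<dots> = pa g (EU y) + sm (of_nat e) (pa g y)"
    unfolding pact_def by (simp add: sum.distrib sm_sum)
  finally show ?thesis .
qed

lemma single_split:
  fixes \<alpha> :: "nat \<Rightarrow>\<^sub>0 nat"
  assumes "Poly_Mapping.lookup \<alpha> i \<noteq> 0"
  shows "\<alpha> = Poly_Mapping.single i 1 + (\<alpha> - Poly_Mapping.single i 1)"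
  by (rule poly_mapping_eqI) (use assms in \<open>auto simp: lookup_add lookup_minus lookup_single when_def\<close>)

lemma X_pderiv:
  assumes i: "i<n"
  shows "X i (pa (pderiv_mp i g) m) = (\<Sum>\<alpha>\<in>Poly_Mapping.keys g.
      sm (of_nat (Poly_Mapping.lookup \<alpha> i) * Poly_Mapping.lookup g \<alpha>) (XM \<alpha> m))"
proof -
  have "X i (pa (pderiv_mp i g) m) = (\<Sum>\<alpha>\<in>Poly_Mapping.keys g.
      sm (of_nat (Poly_Mapping.lookup \<alpha> i) * Poly_Mapping.lookup g \<alpha>) (X i (XM (\<alpha> - Poly_Mapping.single i 1) m)))"
    unfolding pderiv_mp_def by (simp add: pact_sum_p pact_single lin_sum[OF lin_X[OF i]] X_sm[OF i])
  also have "\<dots> = (\<Sum>\<alpha>\<in>Poly_Mapping.keys g.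
      sm (of_nat (Poly_Mapping.lookup \<alpha> i) * Poly_Mapping.lookup g \<alpha>) (XM \<alpha> m))"
  proof (rule sum.cong, simp)
    fix \<alpha> assume "\<alpha> \<in> Poly_Mapping.keys g"
    show "sm (of_nat (Poly_Mapping.lookup \<alpha> i) * Poly_Mapping.lookup g \<alpha>) (X i (XM (\<alpha> - Poly_Mapping.single i 1) m)) =
          sm (of_nat (Poly_Mapping.lookup \<alpha> i) * Poly_Mapping.lookup g \<alpha>) (XM \<alpha> m)"
    proof (cases "Poly_Mapping.lookup \<alpha> i = 0")
      case True then show ?thesis by simp
    next
      case False
      have "XM \<alpha> m = XM (Poly_Mapping.single i 1 + (\<alpha> - Poly_Mapping.single i 1)) m"
        using single_split[OF False] by simp
      also have "\<dots> = X i (XM (\<alpha> - Poly_Mapping.single i 1) m)"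
        by (simp only: Xmon_add Xmon_single[OF i])
      finally show ?thesis by simp
    qed
  qed
  finally show ?thesis .
qed

lemma sum_X_pderiv:
  assumes "hom_of e g"
  shows "(\<Sum>i<n. X i (pa (pderiv_mp i g) m)) = sm (of_nat e) (pa g m)"
proof -
  have "(\<Sum>i<n. X i (pa (pderiv_mp i g) m)) = (\<Sum>i<n. \<Sum>\<alpha>\<in>Poly_Mapping.keys g.
      sm (of_nat (Poly_Mapping.lookup \<alpha> i) * Poly_Mapping.lookup g \<alpha>) (XM \<alpha> m))"
    by (simp add: X_pderiv)
  also have "\<dots> = (\<Sum>\<alpha>\<in>Poly_Mapping.keys g. sm (of_nat (\<Sum>i<n. Poly_Mapping.lookup \<alpha> i) * Poly_Mapping.lookup g \<alpha>) (XM \<alpha> m))"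
    by (subst sum.swap) (simp add: sm_suml[symmetric] sum_distrib_right)
  also have "\<dots> = (\<Sum>\<alpha>\<in>Poly_Mapping.keys g. sm (of_nat e) (sm (Poly_Mapping.lookup g \<alpha>) (XM \<alpha> m)))"
    apply (rule sum.cong, simp)
    using assms unfolding hom_of_def by (simp add: mon_deg_eq[symmetric] sm_mult)
  also have "\<dots> = sm (of_nat e) (pa g m)"
    unfolding pact_def by (simp add: sm_sum)
  finally show ?thesis .
qed

lemma hom_of_mult:
  assumes "hom_of e p" "hom_of e' q"
  shows "hom_of (e + e') (p * q)"
  unfolding hom_of_def
proof
  fix \<gamma> assume "\<gamma> \<in> Poly_Mapping.keys (p * q)"
  then obtain \<alpha> \<beta> where g: "\<gamma> = \<alpha> + \<beta>" and a: "\<alpha> \<in> Poly_Mapping.keys p" and b: "\<beta> \<in> Poly_Mapping.keys q"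
    using keys_mult by blast
  have ka: "Poly_Mapping.keys \<alpha> \<subseteq> {..<n}" "mon_deg \<alpha> = e" and kb: "Poly_Mapping.keys \<beta> \<subseteq> {..<n}" "mon_deg \<beta> = e'"
    using assms a b unfolding hom_of_def by auto
  have kg: "Poly_Mapping.keys \<gamma> \<subseteq> {..<n}" using keys_add[of \<alpha> \<beta>] ka kb g by auto
  have "mon_deg \<gamma> = mon_deg \<alpha> + mon_deg \<beta>"
    using kg ka kb by (simp add: mon_deg_eq g lookup_add sum.distrib)
  then show "Poly_Mapping.keys \<gamma> \<subseteq> {..<n} \<and> mon_deg \<gamma> = e + e'" using kg ka kb by simp
qed

lemma hom_of_one: "hom_of 0 1"
  by (simp add: hom_of_def mon_deg_def)

lemma hom_of_fS:
  "finite S \<Longrightarrow> (\<And>j. j \<in> S \<Longrightarrow> hom_of (e j) (f j)) \<Longrightarrow> hom_of (\<Sum>j\<in>S. e j) (fS f S)"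
  unfolding fS_def
  by (induction S rule: finite_induct) (auto simp: hom_of_one hom_of_mult)

lemma hdeg_hom: "hom_of e g \<Longrightarrow> g \<noteq> 0 \<Longrightarrow> hdeg g = e"
proof -
  assume h: "hom_of e g" and g: "g \<noteq> 0"
  then have "mon_deg ` Poly_Mapping.keys g = {e}"
    unfolding hom_of_def by (auto simp flip: keys_eq_empty)
  then show ?thesis using g by (simp add: hdeg_def)
qed


definition PP :: "int \<Rightarrow> 'm \<Rightarrow> 'm" where "PP c x = EU x - sm (of_int c) x"

lemma lin_PP: "lin sm (PP c)"
  unfolding PP_def[abs_def] by (rule lin_diffop[OF lin_E lin_sm_op])

lemma PPpow_zero: "(PP c ^^ a) 0 = 0"
  using lin_zero[OF lin_funpow[OF lin_PP]] .

lemma PP_pact: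
  assumes "hom_of e g"
  shows "PP c (pa g y) = pa g (PP (c - int e) y)"
proof -
  have "PP c (pa g y) = pa g (EU y) + sm (of_nat e) (pa g y) - sm (of_int c) (pa g y)"
    unfolding PP_def using E_pact[OF assms] by simp
  also have "\<dots> = pa g (EU y) - sm (of_int c - of_nat e) (pa g y)"
    by (simp add: sm_diffl)
  also have "\<dots> = pa g (PP (c - int e) y)"
    unfolding PP_def by (simp add: pact_x_diff pact_x_sm)
  finally show ?thesis .
qed

lemma PPpow_pact:
  assumes "hom_of e g"
  shows "(PP c ^^ a) (pa g y) = pa g ((PP (c - int e) ^^ a) y)"
  by (induction a) (auto simp: PP_pact[OF assms])

lemma PPpow_pactpow:
  assumes "hom_of e g"
  shows "(PP c ^^ a) (pa (g ^ j) y) = pa (g ^ j) ((PP (c - int j * int e) ^^ a) y)"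
proof (induction j arbitrary: c)
  case 0 then show ?case by (simp add: pact_one)
next
  case (Suc j)
  have "(PP c ^^ a) (pa (g ^ Suc j) y) = (PP c ^^ a) (pa g (pa (g ^ j) y))"
    by (simp add: pact_mult)
  also have "\<dots> = pa g (pa (g ^ j) ((PP (c - int e - int j * int e) ^^ a) y))"
    by (simp add: PPpow_pact[OF assms] Suc.IH)
  also have "c - int e - int j * int e = c - int (Suc j) * int e" by (simp add: algebra_simps)
  finally show ?case by (simp add: pact_mult)
qed

abbreviation "TT g d \<equiv> loc_euler_minus n sm X D g d"

lemma T_eq:
  assumes "hom_of e g"
  shows "TT g d (m, k) = (pa g (PP (d + int k * int e) m), Suc k)"
proof -
  have "(\<Sum>i<n. X i (pa g (D i m) - sm (of_nat k) (pa (pderiv_mp i g) m)))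
      = (\<Sum>i<n. pa g (X i (D i m))) - (\<Sum>i<n. sm (of_nat k) (X i (pa (pderiv_mp i g) m)))"
    by (simp add: sum_subtractf[symmetric] lin_diff[OF lin_X] X_sm X_pact_comm)
  also have "\<dots> = pa g (EU m) - sm (of_nat k) (sm (of_nat e) (pa g m))"
    by (simp add: euler_def lin_sum[OF lin_pact] sm_sum[symmetric] sum_X_pderiv[OF assms])
  finally have 1: "(\<Sum>i<n. X i (pa g (D i m) - sm (of_nat k) (pa (pderiv_mp i g) m))) =
     pa g (EU m) - sm (of_nat k) (sm (of_nat e) (pa g m))" .
  have 2: "pa g (PP (d + int k * int e) m) = pa g (EU m) - (sm (of_int d) (pa g m) + sm (of_nat k) (sm (of_nat e) (pa g m)))"
    unfolding PP_def by (simp add: pact_x_diff pact_x_sm pact_x_add sm_addl sm_mult)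
  have 3: "(\<Sum>i<n. X i (pa g (D i m) - sm (of_nat k) (pa (pderiv_mp i g) m))) - sm (of_int d) (pa g m)
     = pa g (PP (d + int k * int e) m)"
    unfolding 1 2 by (simp add: diff_diff_eq add.commute)
  show ?thesis
    unfolding loc_euler_minus_def using 3 by simp
qed

lemma Tpow:
  assumes "hom_of e g"
  shows "(TT g d ^^ a) (m, k) = (pa (g ^ a) ((PP (d + int k * int e) ^^ a) m), k + a)"
proof (induction a)
  case 0 then show ?case by (simp add: pact_one)
next
  case (Suc a)
  have eq: "d + int (k + a) * int e - int a * int e = d + int k * int e" by (simp add: algebra_simps)
  have "(TT g d ^^ Suc a) (m, k) = TT g d (pa (g ^ a) ((PP (d + int k * int e) ^^ a) m), k + a)"
    using Suc by simp
  also have "\<dots> = (pa g (PP (d + int (k + a) * int e) (pa (g ^ a) ((PP (d + int k * int e) ^^ a) m))), Suc (k + a))"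
    by (rule T_eq[OF assms])
  also have "\<dots> = (pa (g ^ Suc a) ((PP (d + int k * int e) ^^ Suc a) m), k + Suc a)"
  proof -
    have "PP (d + int (k + a) * int e) (pa (g ^ a) z) = pa (g ^ a) (PP (d + int k * int e) z)" for z
      using PPpow_pactpow[OF assms, where c="d + int (k + a) * int e" and a=1 and j=a and y=z] eq
      by (simp del: of_nat_add)
    then show ?thesis by (simp add: pact_mult)
  qed
  finally show ?case .
qed

lemma loc_eq_to0: "pa (g ^ l) x = 0 \<Longrightarrow> loc_eq n sm X g (x, K) (0, 0)"
  unfolding loc_eq_def by (auto simp: pact_one)

lemma loc_eq_from0: "pa (g ^ l) x = 0 \<Longrightarrow> loc_eq n sm X g (0, 0) (x, K)"
  unfolding loc_eq_def by (rule exI[of _ l]) (simp add: pact_one lin_minus[OF lin_pact])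

lemma loc_eq_g0: "loc_eq n sm X 0 mk mk'"
  unfolding loc_eq_def by (rule exI[of _ 1]) simp

lemma main_local:
  assumes h: "hom_of e g" and g: "g \<noteq> 0" and lh: "loc_hom n sm X hom g d (m, k)"
    and gen: "\<And>d' z. z \<in> hom d' \<Longrightarrow> \<exists>a\<ge>1. (PP d' ^^ a) z = 0"
  shows "\<exists>a0. \<forall>a\<ge>a0. loc_eq n sm X g ((TT g d ^^ a) (m, k)) (0, 0)"
proof -
  obtain m' k' where m': "m' \<in> hom (d + int k' * int e)" and eq: "loc_eq n sm X g (m, k) (m', k')"
    using lh hdeg_hom[OF h g] unfolding loc_hom_def by auto
  obtain l where "pa (g ^ l) (pa (g ^ k') m - pa (g ^ k) m') = 0"
    using eq unfolding loc_eq_def by auto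
  then have mm: "pa (g ^ (l + k')) m = pa (g ^ (l + k)) m'"
    by (simp add: pact_x_diff power_add pact_mult)
  obtain a0 where a0: "(PP (d + int k' * int e) ^^ a0) m' = 0"
    using gen[OF m'] by auto
  have "loc_eq n sm X g ((TT g d ^^ a) (m, k)) (0, 0)" if a: "a \<ge> a0" for a
  proof -
    let ?c = "d + int k * int e"
    let ?j = "l + k'"
    have z: "(PP (d + int k' * int e) ^^ a) m' = 0"
    proof -
      have "a = (a - a0) + a0" using a by simp
      then have "(PP (d + int k' * int e) ^^ a) m' = (PP (d + int k' * int e) ^^ (a - a0)) ((PP (d + int k' * int e) ^^ a0) m')"
        by (metis funpow_add o_apply)
      then show ?thesis using a0 PPpow_zero by simp
    qed
    have e1: "?c + int ?j * int e - int ?j * int e = ?c" by simp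
    have e2: "?c + int ?j * int e - int (l + k) * int e = d + int k' * int e" by (simp add: algebra_simps)
    have "pa (g ^ ?j) ((PP ?c ^^ a) m) = (PP (?c + int ?j * int e) ^^ a) (pa (g ^ ?j) m)"
      using PPpow_pactpow[OF h, where c="?c + int ?j * int e" and a=a and j="?j" and y=m] by (simp only: e1)
    also have "\<dots> = (PP (?c + int ?j * int e) ^^ a) (pa (g ^ (l + k)) m')" using mm by simp
    also have "\<dots> = pa (g ^ (l + k)) ((PP (d + int k' * int e) ^^ a) m')"
      using PPpow_pactpow[OF h, where c="?c + int ?j * int e" and a=a and j="l + k" and y=m'] by (simp only: e2)
    also have "\<dots> = 0" using z by simp
    finally have zz: "pa (g ^ ?j) ((PP ?c ^^ a) m) = 0" .
    have "pa (g ^ ?j) (pa (g ^ a) ((PP ?c ^^ a) m)) = pa (g ^ a) (pa (g ^ ?j) ((PP ?c ^^ a) m))"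
      by (simp add: pact_mult[symmetric] mult.commute)
    then have "pa (g ^ ?j) (pa (g ^ a) ((PP ?c ^^ a) m)) = 0" using zz by simp
    then show ?thesis using Tpow[OF h] loc_eq_to0 by simp
  qed
  then show ?thesis by blast
qed


lemma loc_eq_sym0: "loc_eq n sm X g mk (0, 0) \<Longrightarrow> loc_eq n sm X g (0, 0) mk"
proof -
  assume "loc_eq n sm X g mk (0, 0)"
  then obtain l where "pa (g ^ l) (fst mk) = 0" unfolding loc_eq_def by (auto simp: pact_one)
  then show ?thesis using loc_eq_from0[of g l "fst mk" "snd mk"] by simp
qed

lemma coch_pow: "(coch_euler_minus n sm X D f d ^^ a) c S = (TT (fS f S) d ^^ a) (c S)"
  by (induction a) (auto simp: coch_euler_minus_def)

lemma cech_d_zero: "cech_d n sm X f (\<lambda>_. (0, 0)) = (\<lambda>_. (0, 0))"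
  by (rule ext) (simp add: cech_d_def Let_def if_distrib[symmetric] cong: if_cong)

end

lemma finite_uniform:
  "finite F \<Longrightarrow> (\<forall>S\<in>F. \<exists>a0::nat. \<forall>a\<ge>a0. Q S a) \<Longrightarrow> \<exists>a0. \<forall>S\<in>F. \<forall>a\<ge>a0. Q S a"
proof (induction F rule: finite_induct)
  case empty then show ?case by simp
next
  case (insert x F)
  then obtain b where b: "\<forall>S\<in>F. \<forall>a\<ge>b. Q S a" by auto
  obtain c where c: "\<forall>a\<ge>c. Q x a" using insert by auto
  show ?case by (rule exI[of _ "max b c"]) (use b c in auto)
qed

theorem mainTheorem5:
  fixes n s :: nat
    and f :: "nat \<Rightarrow> 'k::field_char_0 mpoly"
    and sm :: "'k \<Rightarrow> 'm::ab_group_add \<Rightarrow> 'm"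
    and X D :: "nat \<Rightarrow> 'm \<Rightarrow> 'm"
    and hom :: "int \<Rightarrow> 'm set"
  assumes "\<forall>j<s. in_vars n (f j) \<and> homogeneous_poly (f j)"
    and "graded_weyl_module n sm X D hom"
    and "gen_eulerian n sm X D hom"
  shows "\<forall>i. local_cohom_gen_eulerian n sm X D hom s f i"
proof -
  note G = assms(2)[unfolded graded_weyl_module_def]
  interpret wm n sm X D
  proof unfold_locales
    fix a b :: 'k and x y :: 'm and i j :: nat
    show "sm a (x + y) = sm a x + sm a y" using G[THEN conjunct1] by blast
    show "sm (a + b) x = sm a x + sm b x" using G[THEN conjunct2, THEN conjunct1] by blast
    show "sm (a * b) x = sm a (sm b x)" using G[THEN conjunct2, THEN conjunct2, THEN conjunct1] by blast
    show "sm 1 x = x" using G[THEN conjunct2, THEN conjunct2, THEN conjunct2, THEN conjunct1] by blast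
    show "i < n \<Longrightarrow> X i (x + y) = X i x + X i y" using G[THEN conjunct2, THEN conjunct2, THEN conjunct2, THEN conjunct2, THEN conjunct1] by blast
    show "i < n \<Longrightarrow> D i (x + y) = D i x + D i y" using G[THEN conjunct2, THEN conjunct2, THEN conjunct2, THEN conjunct2, THEN conjunct1] by blast
    show "i < n \<Longrightarrow> X i (sm a x) = sm a (X i x)" using G[THEN conjunct2, THEN conjunct2, THEN conjunct2, THEN conjunct2, THEN conjunct2, THEN conjunct1] by blast
    show "i < n \<Longrightarrow> D i (sm a x) = sm a (D i x)" using G[THEN conjunct2, THEN conjunct2, THEN conjunct2, THEN conjunct2, THEN conjunct2, THEN conjunct1] by blast
    show "i < n \<Longrightarrow> j < n \<Longrightarrow> X i (X j x) = X j (X i x)" using G[THEN conjunct2, THEN conjunct2, THEN conjunct2, THEN conjunct2, THEN conjunct2, THEN conjunct2, THEN conjunct1] by blast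
    show "i < n \<Longrightarrow> j < n \<Longrightarrow> D i (X j x) - X j (D i x) = (if i = j then x else 0)" using G[THEN conjunct2, THEN conjunct2, THEN conjunct2, THEN conjunct2, THEN conjunct2, THEN conjunct2, THEN conjunct2, THEN conjunct2, THEN conjunct1] by blast
  qed
  have gen: "\<exists>a\<ge>1. (PP d' ^^ a) z = 0" if "z \<in> hom d'" for d' z
  proof -
    have "PP d' = (\<lambda>x. euler n X D x - sm (of_int d') x)" by (rule ext) (simp add: PP_def)
    then show ?thesis using assms(3) that unfolding gen_eulerian_def by auto
  qed
  have "\<forall>j<s. \<exists>e. hom_of e (f j)"
    using assms(1) unfolding hom_of_def in_vars_def homogeneous_poly_def by blast
  then obtain ef where ef: "\<And>j. j < s \<Longrightarrow> hom_of (ef j) (f j)" by metis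
  show ?thesis
    unfolding local_cohom_gen_eulerian_def
  proof (intro allI impI)
    fix i d c
    assume "cocycle n sm X s f i c \<and> coch_hom n sm X hom s f i d c"
    then have ch: "\<And>S. S \<subseteq> {..<s} \<Longrightarrow> card S = i \<Longrightarrow> loc_hom n sm X hom (fS f S) d (c S)"
      unfolding coch_hom_def by blast
    let ?F = "{S. S \<subseteq> {..<s} \<and> card S = i}"
    have fin: "finite ?F" by (rule finite_subset[of _ "Pow {..<s}"]) auto
    have "\<forall>S\<in>?F. \<exists>a0. \<forall>a\<ge>a0. loc_eq n sm X (fS f S) ((TT (fS f S) d ^^ a) (c S)) (0, 0)"
    proof
      fix S assume S: "S \<in> ?F"
      then have fS: "finite S" using finite_subset by blast
      have h: "hom_of (\<Sum>j\<in>S. ef j) (fS f S)"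
        by (rule hom_of_fS[OF fS]) (use S ef in auto)
      show "\<exists>a0. \<forall>a\<ge>a0. loc_eq n sm X (fS f S) ((TT (fS f S) d ^^ a) (c S)) (0, 0)"
      proof (cases "fS f S = 0")
        case True then show ?thesis using loc_eq_g0 by auto
      next
        case False
        have "loc_hom n sm X hom (fS f S) d (fst (c S), snd (c S))" using ch S by simp
        from main_local[OF h False this gen] show ?thesis by simp
      qed
    qed
    from finite_uniform[OF fin this] obtain a0 where
      a0: "\<forall>S\<in>?F. \<forall>a\<ge>a0. loc_eq n sm X (fS f S) ((TT (fS f S) d ^^ a) (c S)) (0, 0)" by blast
    let ?a = "max 1 a0"
    have z: "loc_eq n sm X (fS f S) ((coch_euler_minus n sm X D f d ^^ ?a) c S) (0, 0)" if "S \<in> ?F" for S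
      using a0 that by (simp add: coch_pow)
    have "coboundary n sm X s f i ((coch_euler_minus n sm X D f d ^^ ?a) c)"
    proof (cases "i = 0")
      case True then show ?thesis using z unfolding coboundary_def coch_eq_def by auto
    next
      case False
      then show ?thesis using z unfolding coboundary_def coch_eq_def
        by (auto simp: cech_d_zero intro!: exI[of _ "\<lambda>_. (0, 0)"] loc_eq_sym0)
    qed
    then show "\<exists>a\<ge>1. coboundary n sm X s f i ((coch_euler_minus n sm X D f d ^^ a) c)"
      by (intro exI[of _ ?a]) auto
  qed
qed

end
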